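(* Let $p$ be an odd prime, $n\ge2$, and $m_1,\dots,m_n$ integers with $1\le m_i\le p-1$. Let $\Phi=\left(\prod_{i=1}^n(s_i+1)^{m_i}-1\right)^p\in\mathbb Z[s_1,\dots,s_n]$, and for $0\le j_1,\dots,j_n\le p-1$ let $C_{j_1\cdots j_n}$ be the coefficient of $s_1^{j_1}\cdots s_n^{j_n}$ in $\Phi$ (equivalently in the image of $\Phi$ in $\mathbb Z[s_1,\dots,s_n]/(s_1^p,\dots,s_n^p)$). Then $$p^2\ \Big|\ \sum_{j_1=1}^{p-1}\cdots\sum_{j_n=1}^{p-1}(-1)^{j_1+\cdots+j_n}C_{j_1\cdots j_n}.$$ *)

theory Defs
  imports Main "HOL-Library.Poly_Mapping" "HOL-Library.FuncSet" "HOL-Computational_Algebra.Primes"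
begin

text \<open>Multivariate integer polynomials in variables s_0, s_1, ... represented as finitely
  supported maps from monomials (exponent vectors nat =>0 nat) to integer coefficients;
  multiplication is convolution (Poly_Mapping's ring structure).\<close>

type_synonym int_mpoly = "(nat \<Rightarrow>\<^sub>0 nat) \<Rightarrow>\<^sub>0 int"

definition mvar :: "nat \<Rightarrow> int_mpoly" where
  "mvar i = Poly_Mapping.single (Poly_Mapping.single i 1) 1"

definition mcoeff :: "int_mpoly \<Rightarrow> nat set \<Rightarrow> (nat \<Rightarrow> nat) \<Rightarrow> int" where
  "mcoeff P I j = Poly_Mapping.lookup P (\<Sum>i\<in>I. Poly_Mapping.single i (j i))"

end

theory Submission imports Defs "HOL-Number_Theory.Cong" begin

lemma lookup_scale: "Poly_Mapping.lookup (Poly_Mapping.single 0 c * P) x = (c::int) * Poly_Mapping.lookup P x"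
  by (simp add: mult_map_scale_conv_mult[symmetric] map.rep_eq when_def)

lemma mvar_pow: "mvar i ^ s = Poly_Mapping.single (Poly_Mapping.single i s) 1"
  by (induction s) (simp_all add: mvar_def mult_single flip: single_add)

lemma pow_expand: "(mvar i + 1) ^ N = (\<Sum>s\<le>N. Poly_Mapping.single (Poly_Mapping.single i s) (int (N choose s)))"
proof -
  have "(mvar i + 1) ^ N = (\<Sum>s\<le>N. of_nat (N choose s) * mvar i ^ s)"
    by (simp add: binomial_ring)
  also have "\<dots> = (\<Sum>s\<le>N. Poly_Mapping.single (Poly_Mapping.single i s) (int (N choose s)))"
  proof (rule sum.cong[OF refl])
    fix s
    have "(of_nat (N choose s) :: int_mpoly) = Poly_Mapping.single 0 (of_nat (N choose s))" by simp
    thus "of_nat (N choose s) * mvar i ^ s = Poly_Mapping.single (Poly_Mapping.single i s) (int (N choose s))"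
      by (simp only: mvar_pow mult_single) simp
  qed
  finally show ?thesis .
qed

lemma prod_single: "finite I \<Longrightarrow> (\<Prod>i\<in>I. Poly_Mapping.single (f i) (c i)) = Poly_Mapping.single (\<Sum>i\<in>I. f i) (\<Prod>i\<in>I. c i)"
  by (induction I rule: finite_induct) (simp_all add: mult_single)

definition mu :: "nat set \<Rightarrow> (nat \<Rightarrow> nat) \<Rightarrow> (nat \<Rightarrow>\<^sub>0 nat)" where
  "mu I t = (\<Sum>i\<in>I. Poly_Mapping.single i (t i))"

lemma lookup_mu: "finite I \<Longrightarrow> Poly_Mapping.lookup (mu I t) x = (if x \<in> I then t x else 0)"
  by (simp add: mu_def lookup_sum lookup_single when_def)

lemma mu_eq: "finite I \<Longrightarrow> mu I t = mu I j \<longleftrightarrow> (\<forall>i\<in>I. t i = j i)"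
  by (auto simp: poly_mapping_eq_iff fun_eq_iff lookup_mu)

lemma prod_expand: "finite I \<Longrightarrow> (\<Prod>i\<in>I. (mvar i + 1) ^ N i :: int_mpoly) =
   (\<Sum>t\<in>PiE I (\<lambda>i. {..N i}). Poly_Mapping.single (mu I t) (\<Prod>i\<in>I. int (N i choose t i)))"
  by (simp add: pow_expand prod_sum_PiE prod_single mu_def)

lemma coeff: assumes "finite I"
  shows "Poly_Mapping.lookup (\<Prod>i\<in>I. (mvar i + 1) ^ N i :: int_mpoly) (mu I j) = (\<Prod>i\<in>I. int (N i choose j i))"
proof -
  have "Poly_Mapping.lookup (\<Prod>i\<in>I. (mvar i + 1) ^ N i :: int_mpoly) (mu I j)
     = (\<Sum>t\<in>PiE I (\<lambda>i. {..N i}). if t = restrict j I then (\<Prod>i\<in>I. int (N i choose t i)) else 0)"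
    unfolding prod_expand[OF assms] lookup_sum
  proof (rule sum.cong[OF refl])
    fix t assume t: "t \<in> PiE I (\<lambda>i. {..N i})"
    have "mu I t = mu I j \<longleftrightarrow> t = restrict j I"
    proof
      assume "mu I t = mu I j"
      hence h: "\<forall>i\<in>I. t i = j i" by (simp add: mu_eq[OF assms])
      show "t = restrict j I"
      proof (rule extensionalityI)
        show "t \<in> extensional I" using t by (simp add: PiE_def)
        show "restrict j I \<in> extensional I" by (rule restrict_extensional)
        fix x assume "x \<in> I" thus "t x = restrict j I x" using h by simp
      qed
    next
      assume "t = restrict j I"
      hence "\<forall>i\<in>I. t i = j i" by simp
      thus "mu I t = mu I j" by (simp add: mu_eq[OF assms])
    qed
    thus "Poly_Mapping.lookup (Poly_Mapping.single (mu I t) (\<Prod>i\<in>I. int (N i choose t i))) (mu I j) =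
         (if t = restrict j I then \<Prod>i\<in>I. int (N i choose t i) else 0)"
      by (simp only: lookup_single when_def)
  qed
  also have "\<dots> = (\<Prod>i\<in>I. int (N i choose j i))"
  proof (cases "\<forall>i\<in>I. j i \<le> N i")
    case True
    hence "restrict j I \<in> PiE I (\<lambda>i. {..N i})" by (simp add: restrict_PiE_iff)
    hence "(\<Sum>t\<in>PiE I (\<lambda>i. {..N i}). if t = restrict j I then (\<Prod>i\<in>I. int (N i choose t i)) else 0)
       = (\<Prod>i\<in>I. int (N i choose restrict j I i))" 
    proof -
      have fin: "finite (PiE I (\<lambda>i. {..N i}))" by (rule finite_PiE[OF assms]) simp
      show ?thesis using \<open>restrict j I \<in> PiE I (\<lambda>i. {..N i})\<close> by (simp only: sum.delta[OF fin] if_True)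
    qed
    also have "\<dots> = (\<Prod>i\<in>I. int (N i choose j i))" by (rule prod.cong) simp_all
    finally show ?thesis .
  next
    case False
    then obtain i where i: "i \<in> I" "N i < j i" by (auto simp: not_le)
    hence "(\<Prod>i\<in>I. int (N i choose j i)) = 0" using assms
      by (intro prod_zero bexI[of _ i]) simp_all
    moreover have nin: "restrict j I \<notin> PiE I (\<lambda>i. {..N i})"
    proof
      assume "restrict j I \<in> PiE I (\<lambda>i. {..N i})"
      hence "restrict j I i \<in> {..N i}" using i(1) by (rule PiE_mem)
      thus False using i by simp
    qed
    moreover have "(\<Sum>t\<in>PiE I (\<lambda>i. {..N i}). if t = restrict j I then (\<Prod>i\<in>I. int (N i choose t i)) else 0) = 0"
      by (intro sum.neutral ballI if_not_P) (use nin in blast)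
    ultimately show ?thesis by simp
  qed
  finally show ?thesis .
qed



definition AA :: "nat \<Rightarrow> nat \<Rightarrow> int" where
  "AA p N = (\<Sum>t\<in>{1..p-1}. (-1)^t * int (N choose t))"

lemma alt_sum: "N \<ge> 1 \<Longrightarrow> (\<Sum>t\<le>r. (-1)^t * int (N choose t)) = (-1)^r * int ((N-1) choose r)"
proof (induction r)
  case 0 thus ?case by simp
next
  case (Suc r)
  obtain M where M: "N = Suc M" using Suc.prems by (cases N) auto
  show ?case using Suc by (simp add: M algebra_simps)
qed

lemma AA_pmult: assumes "prime p" shows "int p dvd AA p (p * M)"
  unfolding AA_def
proof (rule dvd_sum)
  fix t assume t: "t \<in> {1..p-1}"
  have "t * (p*M choose t) = p*M * ((p*M - 1) choose (t - 1))"
    using t by (intro times_binomial_minus1_eq) auto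
  hence "p dvd t * (p*M choose t)" by simp
  moreover have "\<not> p dvd t" using t assms by (auto dest: dvd_imp_le prime_gt_0_nat)
  ultimately have "p dvd (p*M choose t)" using assms prime_dvd_mult_nat by blast
  thus "int p dvd (-1)^t * int (p*M choose t)" by simp
qed

lemma AA_nondiv: assumes "prime p" "odd p" "\<not> p dvd N" shows "int p dvd AA p N + 1"
proof -
  have N: "N \<ge> 1" using assms(3) by (cases N) auto
  have p: "p \<ge> 2" using assms(1) prime_ge_2_nat by blast
  have "{..p-1} = insert 0 {1..p-1}" by auto
  hence "AA p N + 1 = (\<Sum>t\<le>p-1. (-1)^t * int (N choose t))"
    by (simp add: AA_def)
  also have "\<dots> = (-1)^(p-1) * int ((N-1) choose (p-1))" using alt_sum N by blast
  finally have eq: "AA p N + 1 = (-1)^(p-1) * int ((N-1) choose (p-1))" .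
  have "p * (N choose p) = N * ((N - 1) choose (p - 1))"
    using p by (intro times_binomial_minus1_eq) auto
  hence "p dvd N * ((N - 1) choose (p - 1))" by (metis dvd_triv_left)
  hence "p dvd ((N - 1) choose (p - 1))" using assms prime_dvd_mult_nat by blast
  thus ?thesis unfolding eq by simp
qed


lemma lookup_Phi: assumes "finite I"
  shows "Poly_Mapping.lookup (((\<Prod>i\<in>I. (mvar i + 1) ^ m i) - 1) ^ p) (mu I j)
    = (\<Sum>k\<le>p. int (p choose k) * (-1)^(p-k) * (\<Prod>i\<in>I. int (k * m i choose j i)))"
proof -
  let ?X = "(\<Prod>i\<in>I. (mvar i + 1) ^ m i) :: int_mpoly"
  have "(?X - 1) ^ p = (?X + (-1)) ^ p" by simp
  also have "\<dots> = (\<Sum>k\<le>p. of_nat (p choose k) * ?X ^ k * (-1) ^ (p - k))"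
    by (rule binomial_ring)
  also have "\<dots> = (\<Sum>k\<le>p. Poly_Mapping.single 0 (int (p choose k) * (-1)^(p-k)) *
       (\<Prod>i\<in>I. (mvar i + 1) ^ (k * m i)))"
  proof (rule sum.cong[OF refl])
    fix k
    have "(of_nat (p choose k) * ?X ^ k * (-1) ^ (p - k) :: int_mpoly)
        = of_int (int (p choose k) * (-1)^(p-k)) * ?X ^ k" by simp
    also have "\<dots> = Poly_Mapping.single 0 (int (p choose k) * (-1)^(p-k)) *
       (\<Prod>i\<in>I. (mvar i + 1) ^ (k * m i))"
    proof -
      have e: "Poly_Mapping.single 0 c = (of_int c :: int_mpoly)" for c :: int
        by (metis single_of_int of_int_eq_id id_apply)
      have x: "?X ^ k = (\<Prod>i\<in>I. (mvar i + 1) ^ (k * m i))"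
        by (simp add: prod_power_distrib power_mult[symmetric] mult.commute)
      show ?thesis by (simp only: e x)
    qed
    finally show "(of_nat (p choose k) * ?X ^ k * (-1) ^ (p - k) :: int_mpoly) = \<dots>" .
  qed
  finally show ?thesis
    by (simp add: lookup_sum lookup_scale coeff[OF assms])
qed

lemma main_sum: assumes "finite I"
  shows "(\<Sum>j\<in>I \<rightarrow>\<^sub>E {1..p-1}. (-1) ^ (\<Sum>i\<in>I. j i) *
       Poly_Mapping.lookup (((\<Prod>i\<in>I. (mvar i + 1) ^ m i) - 1) ^ p) (mu I j))
    = (\<Sum>k\<le>p. int (p choose k) * (-1)^(p-k) * (\<Prod>i\<in>I. AA p (k * m i)))"
proof -
  have "(\<Sum>j\<in>I \<rightarrow>\<^sub>E {1..p-1}. (-1) ^ (\<Sum>i\<in>I. j i) *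
       Poly_Mapping.lookup (((\<Prod>i\<in>I. (mvar i + 1) ^ m i) - 1) ^ p) (mu I j))
    = (\<Sum>j\<in>I \<rightarrow>\<^sub>E {1..p-1}. \<Sum>k\<le>p. int (p choose k) * (-1)^(p-k) *
          (\<Prod>i\<in>I. (-1)^(j i) * int (k * m i choose j i)))"
    by (simp add: lookup_Phi[OF assms] sum_distrib_left power_sum prod.distrib mult_ac)
  also have "\<dots> = (\<Sum>k\<le>p. int (p choose k) * (-1)^(p-k) *
      (\<Sum>j\<in>I \<rightarrow>\<^sub>E {1..p-1}. \<Prod>i\<in>I. (-1)^(j i) * int (k * m i choose j i)))"
    by (subst sum.swap) (simp add: sum_distrib_left)
  also have "\<dots> = (\<Sum>k\<le>p. int (p choose k) * (-1)^(p-k) * (\<Prod>i\<in>I. AA p (k * m i)))"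
    by (simp add: AA_def prod_sum_PiE[OF assms])
  finally show ?thesis .
qed


lemma split_sum: "(p::nat) \<ge> 2 \<Longrightarrow> (\<Sum>k\<le>p. f k) = f 0 + f p + (\<Sum>k\<in>{1..p-1}. (f k :: int))"
proof -
  assume p: "p \<ge> 2"
  have "{..p} = insert 0 (insert p {1..p-1})" using p by auto
  thus ?thesis using p by (simp add: algebra_simps)
qed

theorem lemma5p1:
  fixes p n :: nat and m :: "nat \<Rightarrow> nat"
  assumes "prime p" and "odd p" and "n \<ge> 2"
    and "\<forall>i\<in>{1..n}. 1 \<le> m i \<and> m i \<le> p - 1"
  shows "(int p)^2 dvd
    (\<Sum>j\<in>{1..n} \<rightarrow>\<^sub>E {1..p-1}.
       (-1) ^ (\<Sum>i=1..n. j i) *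
       mcoeff (((\<Prod>i=1..n. (mvar i + 1) ^ m i) - 1) ^ p) {1..n} j)"
proof -
  let ?I = "{1..n}"
  define a where "a k = int (p choose k) * (-1)^(p-k)" for k
  have p2: "p \<ge> 2" using assms(1) prime_ge_2_nat by blast
  have eq: "(\<Sum>j\<in>{1..n} \<rightarrow>\<^sub>E {1..p-1}.
       (-1) ^ (\<Sum>i=1..n. j i) *
       mcoeff (((\<Prod>i=1..n. (mvar i + 1) ^ m i) - 1) ^ p) {1..n} j)
     = (\<Sum>k\<le>p. a k * (\<Prod>i\<in>?I. AA p (k * m i)))"
    using main_sum[where I="{1..n}" and p=p and m=m] by (simp add: mcoeff_def mu_def a_def)
  have t0: "(\<Prod>i\<in>?I. AA p (0 * m i)) = 0"
  proof -
    have "AA p 0 = 0" unfolding AA_def by (rule sum.neutral) auto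
    moreover have "1 \<in> ?I" using assms(3) by auto
    ultimately show ?thesis by (metis finite_atLeastAtMost mult_zero_left prod_zero)
  qed
  have tp: "int p ^ 2 dvd (\<Prod>i\<in>?I. AA p (p * m i))"
  proof -
    have "(\<Prod>i\<in>?I. int p) dvd (\<Prod>i\<in>?I. AA p (p * m i))"
      by (rule prod_dvd_prod) (rule AA_pmult[OF assms(1)])
    hence "int p ^ n dvd (\<Prod>i\<in>?I. AA p (p * m i))" by simp
    moreover have "int p ^ 2 dvd int p ^ n" using assms(3) by (rule le_imp_power_dvd)
    ultimately show ?thesis using dvd_trans by blast
  qed
  have mid1: "int p ^ 2 dvd (\<Sum>k\<in>{1..p-1}. a k * ((\<Prod>i\<in>?I. AA p (k * m i)) - (-1)^n))"
  proof (rule dvd_sum)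
    fix k assume k: "k \<in> {1..p-1}"
    have "p dvd (p choose k)" using k p2 assms(1) by (intro dvd_choose_prime) auto
    hence d1: "int p dvd a k" by (simp add: a_def)
    have "[(\<Prod>i\<in>?I. AA p (k * m i)) = (\<Prod>i\<in>?I. -1)] (mod int p)"
    proof (rule cong_prod)
      fix i assume i: "i \<in> ?I"
      have "\<not> p dvd k * m i"
      proof
        assume "p dvd k * m i"
        hence "p dvd k \<or> p dvd m i" using assms(1) prime_dvd_mult_nat by blast
        moreover have "1 \<le> m i" "m i \<le> p - 1" using i assms(4) by auto
        ultimately show False using k p2 by (auto dest: dvd_imp_le)
      qed
      hence "int p dvd AA p (k * m i) - (-1)" using AA_nondiv[OF assms(1,2)] by simp
      thus "[AA p (k * m i) = -1] (mod int p)" by (simp add: cong_iff_dvd_diff)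
    qed
    hence d2: "int p dvd (\<Prod>i\<in>?I. AA p (k * m i)) - (-1)^n" by (simp add: cong_iff_dvd_diff)
    show "int p ^ 2 dvd a k * ((\<Prod>i\<in>?I. AA p (k * m i)) - (-1)^n)"
      using mult_dvd_mono[OF d1 d2] by (simp add: power2_eq_square)
  qed
  have "(\<Sum>k\<le>p. a k) = (1 + (-1::int)) ^ p"
    using binomial_ring[of "1::int" "-1" p] by (simp add: a_def)
  also have "\<dots> = 0" using p2 by simp
  finally have "(\<Sum>k\<le>p. a k) = 0" .
  moreover have "a 0 = -1" "a p = 1" using assms(2) by (simp_all add: a_def)
  ultimately have mid0: "(\<Sum>k\<in>{1..p-1}. a k) = 0" using split_sum[OF p2, of a] by simp
  have "(\<Sum>k\<in>{1..p-1}. a k * (\<Prod>i\<in>?I. AA p (k * m i)))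
      = (\<Sum>k\<in>{1..p-1}. a k * ((\<Prod>i\<in>?I. AA p (k * m i)) - (-1)^n)) + (-1)^n * (\<Sum>k\<in>{1..p-1}. a k)"
    by (simp add: algebra_simps sum.distrib sum_distrib_left sum_subtractf)
  hence mid: "int p ^ 2 dvd (\<Sum>k\<in>{1..p-1}. a k * (\<Prod>i\<in>?I. AA p (k * m i)))"
    using mid1 mid0 by simp
  show ?thesis unfolding eq split_sum[OF p2]
    by (simp only: t0 mult_zero_right add_0 \<open>a p = 1\<close> mult_1) (rule dvd_add[OF tp mid])
qed

end
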